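(* There is no algorithm simulating $f(p)=2p$ on $\mathcal{P}=(0,1/2)$. More precisely: let $R_0$ be a random variable with a fixed law (not depending on $p$), and for $p\in(0,1/2)$ let $\mathbb{P}_p$ be the law under which $X_1,X_2,\dots$ are i.i.d. Bernoulli$(p)$ and independent of $R_0$. Let $T$ be a random time, finite $\mathbb{P}_p$-a.s. for every $p$, such that $\{T\le n\}\in\sigma(X_1,\dots,X_n,R_0)$ for every $n$, and let $S=S(X_1,\dots,X_T,R_0)$ be a measurable function (not depending on $p$) with $S\in[0,1]$. Then it is impossible that $\mathbb{E}_pS=2p$ for all $p\in(0,1/2)$.
   Context: By Lemma 1 (an $s$-coin exists iff an unbiased $[0,1]$-valued estimator of $s$ exists), the nonexistence of such an estimator $S$ is equivalent to the nonexistence of an algorithm producing a $2p$-coin from i.i.d. $p$-coins and independent auxiliary randomness. *)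

theory Defs
  imports "HOL-Probability.Probability"
begin

text \<open>Coin sequences are \<open>x :: nat \<Rightarrow> bool\<close> with \<open>x i\<close> playing the role of X_(i+1);
  the auxiliary randomness \<open>R0\<close> takes values in the space of a fixed probability measure.\<close>

definition coin_space :: "'r measure \<Rightarrow> ((nat \<Rightarrow> bool) \<times> 'r) measure" where
  "coin_space \<mu> = (PiM UNIV (\<lambda>_. count_space UNIV)) \<Otimes>\<^sub>M \<mu>"

definition coin_law :: "'r measure \<Rightarrow> real \<Rightarrow> ((nat \<Rightarrow> bool) \<times> 'r) measure" where
  "coin_law \<mu> p = (PiM UNIV (\<lambda>_. measure_pmf (bernoulli_pmf p))) \<Otimes>\<^sub>M \<mu>"

text \<open>Forget all coins except the first n (n may be infinite): the observation (X_1..X_n, R0).\<close>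
definition obs :: "enat \<Rightarrow> (nat \<Rightarrow> bool) \<times> 'r \<Rightarrow> (nat \<Rightarrow> bool) \<times> 'r" where
  "obs n = (\<lambda>(x, r). (\<lambda>i. if enat i < n then x i else False, r))"

text \<open>An event lies in sigma(X_1,..,X_n,R0) iff it is measurable and determined by obs n.\<close>
definition in_sigma_obs :: "'r measure \<Rightarrow> nat \<Rightarrow> ((nat \<Rightarrow> bool) \<times> 'r) set \<Rightarrow> bool" where
  "in_sigma_obs \<mu> n E \<longleftrightarrow> E \<in> sets (coin_space \<mu>) \<and>
     (\<forall>\<omega>\<in>space (coin_space \<mu>). \<omega> \<in> E \<longleftrightarrow> obs (enat n) \<omega> \<in> E)"

end

theory Submission imports Defs begin
lemma sp: "space (coin_space \<mu>) = UNIV \<times> space \<mu>"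
  by (simp add: coin_space_def space_pair_measure space_PiM)
lemma spl: "space (coin_law \<mu> p) = UNIV \<times> space \<mu>"
  by (simp add: coin_law_def space_pair_measure space_PiM)
lemma sets_law: "sets (coin_law \<mu> p) = sets (coin_space \<mu>)"
  unfolding coin_law_def coin_space_def
  by (intro sets_pair_measure_cong sets_PiM_cong) auto
lemma pl: "prob_space \<mu> \<Longrightarrow> prob_space (coin_law \<mu> p)"
  unfolding coin_law_def
  by (intro prob_space_pair prob_space_PiM) (auto simp: prob_space_measure_pmf)

definition pad :: "bool list \<Rightarrow> nat \<Rightarrow> bool" where
  "pad w = (\<lambda>i. if i < length w then w!i else False)"
definition C :: "bool list \<Rightarrow> (nat \<Rightarrow> bool) set" where
  "C w = {x. \<forall>i<length w. x i = w!i}"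

lemma obs_obs: "m \<le> n \<Longrightarrow> obs (enat m) (obs (enat n) \<omega>) = obs (enat m) \<omega>"
  by (cases \<omega>) (auto simp: obs_def fun_eq_iff)

lemma obs_C: "fst \<omega> \<in> C w \<Longrightarrow> obs (enat (length w)) \<omega> = (pad w, snd \<omega>)"
  by (cases \<omega>) (auto simp: obs_def fun_eq_iff C_def pad_def)

lemma obs_map: "obs (enat n) \<omega> = (pad (map (fst \<omega>) [0..<n]), snd \<omega>)"
  by (cases \<omega>) (auto simp: obs_def fun_eq_iff pad_def)

lemma C_map: "fst \<omega> \<in> C (map (fst \<omega>) [0..<n])"
  by (auto simp: C_def)

lemma C_emb: "C w = prod_emb UNIV M {..<length w} (\<Pi>\<^sub>E i\<in>{..<length w}. {w!i})"
  if "\<And>i. space (M i) = UNIV"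
  using that by (auto simp: C_def prod_emb_def space_PiM PiE_iff)

lemma C_sets: "(\<And>i. sets (M i) = UNIV) \<Longrightarrow> C w \<in> sets (PiM UNIV M)"
proof -
  assume h: "\<And>i. sets (M i) = UNIV"
  hence "\<And>i. space (M i) = UNIV" by (metis sets.top UNIV_I sets.sets_into_space subset_antisym subsetI)
  thus ?thesis using h by (subst C_emb) (auto intro!: sets_PiM_I)
qed

lemma C_measure:
  assumes "p \<in> {0..1}"
  shows "measure (PiM UNIV (\<lambda>_. measure_pmf (bernoulli_pmf p))) (C w)
     = (\<Prod>i<length w. pmf (bernoulli_pmf p) (w!i))"
proof -
  have "emeasure (PiM UNIV (\<lambda>_. measure_pmf (bernoulli_pmf p))) (C w)
     = (\<Prod>i<length w. emeasure (measure_pmf (bernoulli_pmf p)) {w!i})"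
    by (subst C_emb[where M="\<lambda>_. measure_pmf (bernoulli_pmf p)"], simp)
       (intro emeasure_PiM_emb, auto simp: prob_space_measure_pmf)
  also have "\<dots> = ennreal (\<Prod>i<length w. pmf (bernoulli_pmf p) (w!i))"
    by (simp add: emeasure_pmf_single prod_ennreal)
  finally show ?thesis by (simp add: measure_def prod_nonneg)
qed

lemma C_measure_ge:
  assumes "p \<in> {1/4..3/4}"
  shows "measure (PiM UNIV (\<lambda>_. measure_pmf (bernoulli_pmf p))) (C w) \<ge> (1/4) ^ length w"
proof -
  have "(\<Prod>i<length w. (1/4::real)) \<le> (\<Prod>i<length w. pmf (bernoulli_pmf p) (w!i))"
  proof (intro prod_mono conjI)
    fix i show "(1/4::real) \<le> pmf (bernoulli_pmf p) (w!i)"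
      using assms by (cases "w!i") auto
  qed auto
  thus ?thesis using assms by (subst C_measure) auto
qed
theorem corollary1:
  fixes \<mu> :: "'r measure"
    and T :: "(nat \<Rightarrow> bool) \<times> 'r \<Rightarrow> enat"
    and S :: "(nat \<Rightarrow> bool) \<times> 'r \<Rightarrow> real"
  assumes "prob_space \<mu>"
    and T_finite: "\<And>p. p \<in> {0<..<1/2} \<Longrightarrow> AE \<omega> in coin_law \<mu> p. T \<omega> \<noteq> \<infinity>"
    and T_stop: "\<And>n. in_sigma_obs \<mu> n {\<omega> \<in> space (coin_space \<mu>). T \<omega> \<le> enat n}"
    and S_meas: "S \<in> borel_measurable (coin_space \<mu>)"
    and S_dep: "\<And>\<omega>. \<omega> \<in> space (coin_space \<mu>) \<Longrightarrow> S \<omega> = S (obs (T \<omega>) \<omega>)"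
    and S_range: "\<And>\<omega>. \<omega> \<in> space (coin_space \<mu>) \<Longrightarrow> 0 \<le> S \<omega> \<and> S \<omega> \<le> 1"
  shows "\<not> (\<forall>p \<in> {0<..<1/2}. integral\<^sup>L (coin_law \<mu> p) S = 2 * p)"
proof
  assume hyp: "\<forall>p \<in> {0<..<1/2}. integral\<^sup>L (coin_law \<mu> p) S = 2 * p"
  interpret mu: prob_space \<mu> by fact
  have obs_sp: "obs n \<omega> \<in> space (coin_space \<mu>)" if "\<omega> \<in> space (coin_space \<mu>)" for n \<omega>
    using that by (cases \<omega>) (auto simp: sp obs_def)
  have le_iff: "T (obs (enat n) \<omega>) \<le> enat n \<longleftrightarrow> T \<omega> \<le> enat n"
    if "\<omega> \<in> space (coin_space \<mu>)" for n \<omega>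
    using T_stop[of n] that obs_sp[OF that, of "enat n"] unfolding in_sigma_obs_def by blast
  have Tle_sets: "{\<omega> \<in> space (coin_space \<mu>). T \<omega> \<le> enat n} \<in> sets (coin_space \<mu>)" for n
    using T_stop[of n] unfolding in_sigma_obs_def by blast
  define E where "E n = {\<omega> \<in> space (coin_space \<mu>). T \<omega> = enat n}" for n
  have eq_iff: "t = enat n \<longleftrightarrow> t \<le> enat n \<and> (n = 0 \<or> \<not> t \<le> enat (n - 1))" for t :: enat and n
    by (cases t) auto
  have E_sets: "E n \<in> sets (coin_space \<mu>)" for n
  proof (cases "n = 0")
    case True
    have "E n = {\<omega> \<in> space (coin_space \<mu>). T \<omega> \<le> enat 0}"
      using True by (auto simp: E_def eq_iff[of _ 0])
    then show ?thesis using Tle_sets[of 0] by simp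
  next
    case False
    have "E n = {\<omega> \<in> space (coin_space \<mu>). T \<omega> \<le> enat n} - {\<omega> \<in> space (coin_space \<mu>). T \<omega> \<le> enat (n-1)}"
      using False by (auto simp: E_def eq_iff[of _ n])
    then show ?thesis using Tle_sets by auto
  qed
  have T_obs: "T (obs (enat n) \<omega>) = enat n \<longleftrightarrow> T \<omega> = enat n"
    if "\<omega> \<in> space (coin_space \<mu>)" for n \<omega>
  proof -
    have "T (obs (enat (n-1)) (obs (enat n) \<omega>)) \<le> enat (n-1) \<longleftrightarrow> T \<omega> \<le> enat (n-1)"
      using le_iff[OF that, of "n-1"] by (simp add: obs_obs)
    then have "T (obs (enat n) \<omega>) \<le> enat (n-1) \<longleftrightarrow> T \<omega> \<le> enat (n-1)"
      using le_iff[OF obs_sp[OF that], of "n-1"] by simp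
    then show ?thesis using le_iff[OF that, of n]
      by (subst (1 2) eq_iff[of _ n]) blast
  qed
  define g where "g w r = (1 - S (pad w, r)) * indicator (E (length w)) (pad w, r)" for w r
  define G where "G w \<omega> = indicator (C w) (fst \<omega>) * g w (snd \<omega>)" for w \<omega>
  have pad_meas: "(\<lambda>r. (pad w, r)) \<in> \<mu> \<rightarrow>\<^sub>M coin_space \<mu>" for w
    unfolding coin_space_def by (rule measurable_Pair1') (simp add: space_PiM)
  have g_meas: "g w \<in> borel_measurable \<mu>" for w
    unfolding g_def
    using measurable_comp[OF pad_meas S_meas] measurable_comp[OF pad_meas borel_measurable_indicator[OF E_sets]]
    by (auto simp: o_def intro!: borel_measurable_times borel_measurable_diff)
  have G_nn: "0 \<le> G w \<omega>" if "\<omega> \<in> space (coin_space \<mu>)" for w \<omega>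
  proof -
    have "0 \<le> S (pad w, snd \<omega>)" "S (pad w, snd \<omega>) \<le> 1"
      using S_range[of "(pad w, snd \<omega>)"] that by (auto simp: sp)
    then show ?thesis by (auto simp: G_def g_def indicator_def)
  qed
  have G_le: "G w \<omega> \<le> 1 - S \<omega>" if om: "\<omega> \<in> space (coin_space \<mu>)" for w \<omega>
  proof (cases "fst \<omega> \<in> C w \<and> (pad w, snd \<omega>) \<in> E (length w)")
    case True
    then have o: "obs (enat (length w)) \<omega> = (pad w, snd \<omega>)" by (simp add: obs_C)
    with True have "T (obs (enat (length w)) \<omega>) = enat (length w)" by (simp add: E_def)
    then have Tw: "T \<omega> = enat (length w)" using T_obs[OF om] by simp
    have "S \<omega> = S (pad w, snd \<omega>)" using S_dep[OF om] Tw o by simp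
    then show ?thesis using True by (simp add: G_def g_def)
  next
    case False
    then show ?thesis using S_range[OF om] by (auto simp: G_def g_def indicator_def)
  qed
  have G_map: "G (map (fst \<omega>) [0..<n]) \<omega> = 1 - S \<omega>"
    if om: "\<omega> \<in> space (coin_space \<mu>)" and Tn: "T \<omega> = enat n" for \<omega> n
  proof -
    have o: "obs (enat n) \<omega> = (pad (map (fst \<omega>) [0..<n]), snd \<omega>)" by (rule obs_map)
    have "obs (enat n) \<omega> \<in> E n" using T_obs[OF om] Tn obs_sp[OF om] by (simp add: E_def)
    moreover have "S \<omega> = S (obs (enat n) \<omega>)" using S_dep[OF om] Tn by simp
    ultimately show ?thesis using C_map[of \<omega> n] o by (simp add: G_def g_def)
  qed
  define B where "B p = PiM UNIV (\<lambda>_::nat. measure_pmf (bernoulli_pmf p))" for p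
  have law: "coin_law \<mu> p = B p \<Otimes>\<^sub>M \<mu>" for p by (simp add: coin_law_def B_def)
  have B_prob: "prob_space (B p)" for p
    unfolding B_def by (intro prob_space_PiM) (auto simp: prob_space_measure_pmf)
  have C_B: "C w \<in> sets (B p)" for w p
    unfolding B_def by (rule C_sets) simp
  have G_meas: "G w \<in> borel_measurable (coin_law \<mu> p)" for w p
    unfolding G_def law
    using measurable_comp[OF measurable_fst borel_measurable_indicator[OF C_B]]
      measurable_comp[OF measurable_snd g_meas]
    by (auto simp: o_def intro!: borel_measurable_times)
  have G_int: "integrable (coin_law \<mu> p) (G w)" for w p
  proof -
    interpret P: prob_space "coin_law \<mu> p" using pl[OF \<open>prob_space \<mu>\<close>] .
    show ?thesis
    proof (rule P.integrable_const_bound[where B=1])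
      show "AE x in coin_law \<mu> p. norm (G w x) \<le> 1"
      proof (rule AE_I2)
        fix x assume "x \<in> space (coin_law \<mu> p)"
        hence x: "x \<in> space (coin_space \<mu>)" by (simp add: spl sp)
        show "norm (G w x) \<le> 1" using G_nn[OF x, of w] G_le[OF x, of w] S_range[OF x] by simp
      qed
    qed (rule G_meas)
  qed
  have S_meas': "S \<in> borel_measurable (coin_law \<mu> p)" for p
    using S_meas measurable_cong_sets[OF sets_law refl] by blast
  have S_int: "integrable (coin_law \<mu> p) S" for p
  proof -
    interpret P: prob_space "coin_law \<mu> p" using pl[OF \<open>prob_space \<mu>\<close>] .
    show ?thesis
    proof (rule P.integrable_const_bound[where B=1])
      show "AE x in coin_law \<mu> p. norm (S x) \<le> 1"
      proof (rule AE_I2)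
        fix x assume "x \<in> space (coin_law \<mu> p)"
        hence x: "x \<in> space (coin_space \<mu>)" by (simp add: spl sp)
        show "norm (S x) \<le> 1" using S_range[OF x] by simp
      qed
    qed (rule S_meas')
  qed
  have G_integral: "integral\<^sup>L (coin_law \<mu> p) (G w) = measure (B p) (C w) * integral\<^sup>L \<mu> (g w)" for w p
  proof -
    interpret Bp: prob_space "B p" by (rule B_prob)
    interpret pair_sigma_finite "B p" \<mu> by unfold_locales
    have "integral\<^sup>L (coin_law \<mu> p) (G w) = (\<integral>x. (\<integral>y. G w (x, y) \<partial>\<mu>) \<partial>B p)"
      using integral_fst'[of "G w"] G_int[of p w] by (simp add: law)
    also have "\<dots> = (\<integral>x. indicator (C w) x * integral\<^sup>L \<mu> (g w) \<partial>B p)"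
      by (simp add: G_def)
    also have "\<dots> = measure (B p) (C w) * integral\<^sup>L \<mu> (g w)"
      using C_B by simp
    finally show ?thesis .
  qed
  have q_int: "integrable (coin_law \<mu> p) (\<lambda>\<omega>. 1 - S \<omega>)" for p
  proof -
    interpret P: prob_space "coin_law \<mu> p" using pl[OF \<open>prob_space \<mu>\<close>] .
    show ?thesis using S_int by auto
  qed
  have int_q: "integral\<^sup>L (coin_law \<mu> p) (\<lambda>\<omega>. 1 - S \<omega>) = 1 - 2 * p" if p: "p \<in> {0<..<1/2}" for p
  proof -
    interpret P: prob_space "coin_law \<mu> p" using pl[OF \<open>prob_space \<mu>\<close>] .
    have "integral\<^sup>L (coin_law \<mu> p) (\<lambda>\<omega>. 1 - S \<omega>) = 1 - integral\<^sup>L (coin_law \<mu> p) S"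
    proof -
      have "integral\<^sup>L (coin_law \<mu> p) (\<lambda>\<omega>. 1 - S \<omega>) = integral\<^sup>L (coin_law \<mu> p) (\<lambda>_. 1) - integral\<^sup>L (coin_law \<mu> p) S"
        by (rule Bochner_Integration.integral_diff) (auto simp: S_int)
      then show ?thesis by (simp add: P.prob_space)
    qed
    then show ?thesis using hyp p by simp
  qed
  define P0 where "P0 = coin_law \<mu> (1/4)"
  have "\<exists>w. integral\<^sup>L P0 (G w) > 0"
  proof (rule ccontr)
    assume "\<not> ?thesis"
    moreover have "integral\<^sup>L P0 (G w) \<ge> 0" for w
      unfolding P0_def by (intro integral_nonneg_AE AE_I2) (auto simp: spl sp intro!: G_nn)
    ultimately have "integral\<^sup>L P0 (G w) = 0" for w by (meson not_less order_antisym)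
    then have "AE \<omega> in P0. G w \<omega> = 0" for w
      unfolding P0_def using integral_nonneg_eq_0_iff_AE[OF G_int] G_nn
      by (metis (no_types, lifting) AE_I2 SigmaE spl sp)
    then have AEG: "AE \<omega> in P0. \<forall>w. G w \<omega> = 0" by (simp add: AE_all_countable)
    have Tf: "AE \<omega> in P0. T \<omega> \<noteq> \<infinity>" unfolding P0_def by (rule T_finite) auto
    have "AE \<omega> in P0. 1 - S \<omega> = 0"
      using AEG Tf AE_space unfolding P0_def
    proof eventually_elim
      case (elim \<omega>)
      then have om: "\<omega> \<in> space (coin_space \<mu>)" by (simp add: spl sp)
      from elim obtain n where "T \<omega> = enat n" by auto
      then show ?case using G_map[OF om] elim by metis
    qed
    then have "integral\<^sup>L P0 (\<lambda>\<omega>. 1 - S \<omega>) = 0" by (rule integral_eq_zero_AE)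
    moreover have "integral\<^sup>L P0 (\<lambda>\<omega>. 1 - S \<omega>) = 1/2" unfolding P0_def by (subst int_q) auto
    ultimately show False by simp
  qed
  then obtain w where w: "integral\<^sup>L P0 (G w) > 0" by blast
  define I where "I = integral\<^sup>L \<mu> (g w)"
  have "measure (B (1/4)) (C w) * I > 0" using w G_integral unfolding P0_def I_def by simp
  then have Ipos: "I > 0" by (simp add: zero_less_mult_iff)
  define c where "c = (1/4) ^ length w * I"
  have cpos: "c > 0" using Ipos by (simp add: c_def)
  define p where "p = 1/2 - min (1/8) (c/4)"
  have p: "p \<in> {0<..<1/2}" "p \<in> {1/4..3/4}" using cpos by (auto simp: p_def)
  have "c \<le> measure (B p) (C w) * I"
    unfolding c_def using C_measure_ge[OF p(2), of w] Ipos by (intro mult_right_mono) (auto simp: B_def)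
  also have "\<dots> = integral\<^sup>L (coin_law \<mu> p) (G w)" using G_integral by (simp add: I_def)
  also have "\<dots> \<le> integral\<^sup>L (coin_law \<mu> p) (\<lambda>\<omega>. 1 - S \<omega>)"
    using G_int q_int by (rule integral_mono) (auto simp: spl sp intro!: G_le)
  also have "\<dots> = 1 - 2 * p" using int_q[OF p(1)] .
  finally show False using cpos by (auto simp: p_def)
qed
end
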